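(* Let $\sim$ and $\sim'$ be right congruences on $\Sigma^*$. (a) If $\sim'$ is coarser than $\sim$ (i.e. $\sim\subseteq\sim'$) and $\sim$ has no critical tuple, then $\sim'$ has no critical tuple. (b) If $\sim$ and $\sim'$ both have no critical tuple, then $\sim\cap\sim'$ is a right congruence which has no critical tuple.
   Context: A right congruence on $\Sigma^*$ is an equivalence $\sim$ with $x\sim y\Rightarrow xz\sim yz$. A critical tuple in a right congruence $\sim$ is $(u_2,v_2,u,v)$ with $|u_2|=|v_2|\ge1$, $u=u_1u_2$, $v=v_1v_2$ for some words $u_1,v_1$, and $u_2w\not\sim v_2w$ for all $w\in\{u,v\}^*$. *)

theory Defs
  imports Main
begin

definition right_congruence :: "'a list rel \<Rightarrow> bool" where
  "right_congruence R \<longleftrightarrow> equiv UNIV R \<and>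
     (\<forall>x y z. (x, y) \<in> R \<longrightarrow> (x @ z, y @ z) \<in> R)"

definition word_star :: "'a list set \<Rightarrow> 'a list set" where
  "word_star L = {concat ws | ws. set ws \<subseteq> L}"

definition critical_tuple :: "'a list rel \<Rightarrow> 'a list \<Rightarrow> 'a list \<Rightarrow> 'a list \<Rightarrow> 'a list \<Rightarrow> bool" where
  "critical_tuple R u2 v2 u v \<longleftrightarrow>
     length u2 = length v2 \<and> length u2 \<ge> 1 \<and>
     (\<exists>u1. u = u1 @ u2) \<and> (\<exists>v1. v = v1 @ v2) \<and>
     (\<forall>w \<in> word_star {u, v}. (u2 @ w, v2 @ w) \<notin> R)"

definition has_critical_tuple :: "'a list rel \<Rightarrow> bool" where
  "has_critical_tuple R \<longleftrightarrow> (\<exists>u2 v2 u v. critical_tuple R u2 v2 u v)"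

end

theory Submission
  imports Defs
begin

lemma ws_app: "x \<in> word_star L \<Longrightarrow> y \<in> word_star L \<Longrightarrow> x @ y \<in> word_star L"
  unfolding word_star_def
proof clarify
  fix ws ws' assume "set ws \<subseteq> L" "set ws' \<subseteq> L"
  then show "\<exists>zs. concat ws @ concat ws' = concat zs \<and> set zs \<subseteq> L"
    by (intro exI[of _ "ws @ ws'"]) auto
qed

lemma ws_nil: "[] \<in> word_star L"
  unfolding word_star_def by (intro CollectI exI[of _ "[]"]) auto

lemma ws_single: "x \<in> L \<Longrightarrow> x \<in> word_star L"
  unfolding word_star_def by (intro CollectI exI[of _ "[x]"]) auto

lemma ws_sub: "M \<subseteq> word_star L \<Longrightarrow> x \<in> word_star M \<Longrightarrow> x \<in> word_star L"
proof -
  assume M: "M \<subseteq> word_star L" and "x \<in> word_star M"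
  then obtain ws where x: "x = concat ws" and s: "set ws \<subseteq> M" unfolding word_star_def by blast
  have "concat ws \<in> word_star L" using s
  proof (induction ws)
    case Nil then show ?case using ws_nil by simp
  next
    case (Cons a ws) then show ?case using M ws_app by fastforce
  qed
  then show ?thesis using x by simp
qed

lemma ct_transfer:
  assumes "critical_tuple S u2 v2 u v" "\<forall>w \<in> word_star {u, v}. (u2 @ w, v2 @ w) \<notin> T"
  shows "critical_tuple T u2 v2 u v"
  using assms unfolding critical_tuple_def by simp

theorem lemma17:
  fixes R R' :: "('a::finite) list rel"
  assumes "right_congruence R" and "right_congruence R'"
  shows "(R \<subseteq> R' \<and> \<not> has_critical_tuple R \<longrightarrow> \<not> has_critical_tuple R')
     \<and> (\<not> has_critical_tuple R \<and> \<not> has_critical_tuple R' \<longrightarrow>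
          right_congruence (R \<inter> R') \<and> \<not> has_critical_tuple (R \<inter> R'))"
proof (intro conjI impI)
  assume a: "R \<subseteq> R' \<and> \<not> has_critical_tuple R"
  show "\<not> has_critical_tuple R'"
  proof
    assume "has_critical_tuple R'"
    then obtain u2 v2 u v where c: "critical_tuple R' u2 v2 u v"
      unfolding has_critical_tuple_def by blast
    have "\<forall>w \<in> word_star {u, v}. (u2 @ w, v2 @ w) \<notin> R"
      using c a unfolding critical_tuple_def by blast
    then have "critical_tuple R u2 v2 u v" using ct_transfer[OF c] by simp
    then show False using a unfolding has_critical_tuple_def by blast
  qed
next
  have e: "equiv UNIV R" "equiv UNIV R'" using assms unfolding right_congruence_def by auto
  have "equiv UNIV (R \<inter> R')"
  proof (rule equivI)
    show "refl (R \<inter> R')" using e unfolding equiv_def refl_on_def by auto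
    show "sym (R \<inter> R')" using e unfolding equiv_def by (meson sym_Int)
    show "trans (R \<inter> R')" using e unfolding equiv_def by (meson trans_Int)
    show "R \<inter> R' \<subseteq> UNIV \<times> UNIV" by simp
  qed
  then show "right_congruence (R \<inter> R')" using assms
    unfolding right_congruence_def by auto
next
  assume a: "\<not> has_critical_tuple R \<and> \<not> has_critical_tuple R'"
  show "\<not> has_critical_tuple (R \<inter> R')"
  proof
    assume "has_critical_tuple (R \<inter> R')"
    then obtain u2 v2 u v where c: "critical_tuple (R \<inter> R') u2 v2 u v"
      unfolding has_critical_tuple_def by blast
    have "\<not> critical_tuple R u2 v2 u v" using a unfolding has_critical_tuple_def by blast
    then have "\<not> (\<forall>w \<in> word_star {u, v}. (u2 @ w, v2 @ w) \<notin> R)"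
      using ct_transfer[OF c] by blast
    then obtain w1 where w1: "w1 \<in> word_star {u,v}" "(u2 @ w1, v2 @ w1) \<in> R" by blast
    have "\<not> critical_tuple R' (u2 @ w1) (v2 @ w1) (u @ w1) (v @ w1)"
      using a unfolding has_critical_tuple_def by blast
    obtain u1 v1 where uv: "u = u1 @ u2" "v = v1 @ v2" "length u2 = length v2" "length u2 \<ge> 1"
      using c unfolding critical_tuple_def by blast
    have "\<not> (\<forall>w \<in> word_star {u @ w1, v @ w1}. ((u2 @ w1) @ w, (v2 @ w1) @ w) \<notin> R')"
    proof
      assume h: "\<forall>w \<in> word_star {u @ w1, v @ w1}. ((u2 @ w1) @ w, (v2 @ w1) @ w) \<notin> R'"
      have "critical_tuple R' (u2 @ w1) (v2 @ w1) (u @ w1) (v @ w1)"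
        unfolding critical_tuple_def
      proof (intro conjI)
        show "length (u2 @ w1) = length (v2 @ w1)" using uv by simp
        show "length (u2 @ w1) \<ge> 1" using uv by simp
        show "\<exists>u1'. u @ w1 = u1' @ (u2 @ w1)" using uv by simp
        show "\<exists>v1'. v @ w1 = v1' @ (v2 @ w1)" using uv by simp
        show "\<forall>w \<in> word_star {u @ w1, v @ w1}. ((u2 @ w1) @ w, (v2 @ w1) @ w) \<notin> R'" by (rule h)
      qed
      then show False using \<open>\<not> critical_tuple R' (u2 @ w1) (v2 @ w1) (u @ w1) (v @ w1)\<close> by contradiction
    qed
    then obtain w2 where w2: "w2 \<in> word_star {u @ w1, v @ w1}"
      "((u2 @ w1) @ w2, (v2 @ w1) @ w2) \<in> R'" by blast
    have rc: "\<forall>x y z. (x, y) \<in> R \<longrightarrow> (x @ z, y @ z) \<in> R"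
      using assms(1) unfolding right_congruence_def by blast
    have "((u2 @ w1) @ w2, (v2 @ w1) @ w2) \<in> R"
      using rc w1(2) by blast
    moreover have "u @ w1 \<in> word_star {u, v}" using ws_app[OF ws_single w1(1)] by simp
    moreover have "v @ w1 \<in> word_star {u, v}" using ws_app[OF ws_single w1(1)] by simp
    ultimately have "{u @ w1, v @ w1} \<subseteq> word_star {u, v}" by simp
    have w12: "w1 @ w2 \<in> word_star {u,v}"
      using ws_app[OF w1(1) ws_sub[OF \<open>{u @ w1, v @ w1} \<subseteq> word_star {u, v}\<close> w2(1)]] .
    have "(u2 @ (w1 @ w2), v2 @ (w1 @ w2)) \<in> R \<inter> R'"
      using w2(2) \<open>((u2 @ w1) @ w2, (v2 @ w1) @ w2) \<in> R\<close> by simp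
    moreover have "\<forall>w \<in> word_star {u, v}. (u2 @ w, v2 @ w) \<notin> R \<inter> R'"
      using c unfolding critical_tuple_def by blast
    ultimately show False using w12 by blast
  qed
qed

end
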